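(* Let $(b,c)$ be a locally finite connected weighted graph over $X$ such that $\sup_{x,y\in X}d(x,y)<\infty$. Then $X$ is totally bounded with respect to every metric $\sigma$ on $X$ which is intrinsic with respect to some measure $m$ on $X$ with $m(X)<\infty$.
   Context: Let $X$ be a countably infinite set. A weighted graph $(b,c)$ over $X$ consists of a symmetric $b:X\times X\to[0,\infty)$ with $b(x,x)=0$ and $\sum_{y}b(x,y)<\infty$ for all $x$, and $c:X\to[0,\infty)$. It is locally finite if each $x$ has finitely many $y$ with $b(x,y)>0$. A path is a finite sequence $(x_0,\dots,x_n)$ of pairwise distinct vertices with $b(x_{i-1},x_i)>0$; connected means any two distinct vertices are joined by a path. Define $d(x,y)=\inf\{\sum_{i=1}^n 1/b(x_{i-1},x_i):(x_0,\dots,x_n)\text{ a path from }x\text{ to }y\}$, $d(x,x)=0$. A measure on $X$ is $m:X\to[0,\infty)$ with $m(A)=\sum_{x\in A}m(x)$. A metric $\sigma$ on $X$ is intrinsic with respect to $m$ if $\frac12\sum_{y}b(x,y)\sigma(x,y)^2\le m(x)$ for all $x$. *)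

theory Defs
  imports "HOL-Analysis.Analysis"
begin

definition weighted_graph :: "('x \<Rightarrow> 'x \<Rightarrow> real) \<Rightarrow> ('x \<Rightarrow> real) \<Rightarrow> bool" where
  "weighted_graph b c \<longleftrightarrow>
     (\<forall>x y. b x y = b y x) \<and> (\<forall>x y. 0 \<le> b x y) \<and> (\<forall>x. b x x = 0) \<and>
     (\<forall>x. (\<lambda>y. b x y) summable_on UNIV) \<and> (\<forall>x. 0 \<le> c x)"

definition locally_finite_graph :: "('x \<Rightarrow> 'x \<Rightarrow> real) \<Rightarrow> bool" where
  "locally_finite_graph b \<longleftrightarrow> (\<forall>x. finite {y. b x y > 0})"

definition is_path :: "('x \<Rightarrow> 'x \<Rightarrow> real) \<Rightarrow> 'x list \<Rightarrow> bool" where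
  "is_path b xs \<longleftrightarrow> xs \<noteq> [] \<and> distinct xs \<and>
     (\<forall>i. Suc i < length xs \<longrightarrow> b (xs ! i) (xs ! Suc i) > 0)"

definition path_from_to :: "('x \<Rightarrow> 'x \<Rightarrow> real) \<Rightarrow> 'x \<Rightarrow> 'x \<Rightarrow> 'x list \<Rightarrow> bool" where
  "path_from_to b x y xs \<longleftrightarrow> is_path b xs \<and> hd xs = x \<and> last xs = y"

definition connected_graph :: "('x \<Rightarrow> 'x \<Rightarrow> real) \<Rightarrow> bool" where
  "connected_graph b \<longleftrightarrow> (\<forall>x y. x \<noteq> y \<longrightarrow> (\<exists>xs. path_from_to b x y xs))"

definition path_length :: "('x \<Rightarrow> 'x \<Rightarrow> real) \<Rightarrow> 'x list \<Rightarrow> real" where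
  "path_length b xs = (\<Sum>i<length xs - 1. 1 / b (xs ! i) (xs ! Suc i))"

definition graph_dist :: "('x \<Rightarrow> 'x \<Rightarrow> real) \<Rightarrow> 'x \<Rightarrow> 'x \<Rightarrow> real" where
  "graph_dist b x y = (if x = y then 0 else Inf {path_length b xs | xs. path_from_to b x y xs})"

definition is_measure_on :: "('x \<Rightarrow> real) \<Rightarrow> bool" where
  "is_measure_on m \<longleftrightarrow> (\<forall>x. 0 \<le> m x)"

text \<open>m(X) < \<infinity> for a nonnegative m means summability over the whole vertex set.\<close>
definition finite_total_mass :: "('x \<Rightarrow> real) \<Rightarrow> bool" where
  "finite_total_mass m \<longleftrightarrow> m summable_on UNIV"

definition is_metric :: "('x \<Rightarrow> 'x \<Rightarrow> real) \<Rightarrow> bool" where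
  "is_metric \<sigma> \<longleftrightarrow> (\<forall>x y. \<sigma> x y = 0 \<longleftrightarrow> x = y) \<and> (\<forall>x y. \<sigma> x y = \<sigma> y x) \<and>
     (\<forall>x y z. \<sigma> x z \<le> \<sigma> x y + \<sigma> y z)"

definition intrinsic :: "('x \<Rightarrow> 'x \<Rightarrow> real) \<Rightarrow> ('x \<Rightarrow> real) \<Rightarrow> ('x \<Rightarrow> 'x \<Rightarrow> real) \<Rightarrow> bool" where
  "intrinsic b m \<sigma> \<longleftrightarrow> (\<forall>x. (\<lambda>y. b x y * (\<sigma> x y)^2) summable_on UNIV \<and>
       (1/2) * (\<Sum>\<^sub>\<infinity>y. b x y * (\<sigma> x y)^2) \<le> m x)"

definition totally_bounded_wrt :: "('x \<Rightarrow> 'x \<Rightarrow> real) \<Rightarrow> bool" where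
  "totally_bounded_wrt \<sigma> \<longleftrightarrow> (\<forall>e>0. \<exists>F. finite F \<and> (\<forall>x. \<exists>y\<in>F. \<sigma> x y < e))"

end

theory Submission
  imports Defs
begin

lemma fin_le_infsum:
  fixes f :: "'a \<Rightarrow> real"
  assumes "f summable_on UNIV" "\<And>x. 0 \<le> f x" "finite F"
  shows "sum f F \<le> infsum f UNIV"
proof -
  have "infsum f F \<le> infsum f UNIV"
    by (rule infsum_mono_neutral) (use assms in auto)
  thus ?thesis using assms(3) by simp
qed

lemma tail_small:
  fixes m :: "'a \<Rightarrow> real"
  assumes "m summable_on UNIV" "\<And>x. 0 \<le> m x" "d > 0"
  shows "\<exists>K. finite K \<and> (\<forall>F. finite F \<and> F \<inter> K = {} \<longrightarrow> sum m F < d)"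
proof -
  obtain K where K: "finite K" "dist (sum m K) (infsum m UNIV) \<le> d/2"
    using infsum_finite_approximation[OF assms(1), of "d/2"] assms(3) by auto
  show ?thesis
  proof (intro exI conjI allI impI)
    fix F assume F: "finite F \<and> F \<inter> K = {}"
    have "sum m (F \<union> K) \<le> infsum m UNIV"
      using fin_le_infsum[OF assms(1,2)] F K by auto
    moreover have "sum m (F \<union> K) = sum m F + sum m K"
      using F K by (simp add: sum.union_disjoint)
    moreover have "sum m K - infsum m UNIV \<ge> - d/2"
    proof -
      have h: "\<bar>sum m K - infsum m UNIV\<bar> \<le> d/2" using K(2) by (simp add: dist_real_def)
      show ?thesis using h unfolding abs_le_iff by linarith
    qed
    ultimately show "sum m F < d" using assms(3) by linarith
  qed (use K in auto)
qed

lemma amgm: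
  fixes bb r t :: real
  assumes "bb > 0" "t > 0" "r \<ge> 0"
  shows "r \<le> t / (2*bb) + bb * r^2 / (2*t)"
proof -
  have eq: "t/(2*bb) + bb*r^2/(2*t) - r = (bb*r - t)^2/(2*bb*t)"
    using assms by (simp add: field_simps power2_eq_square)
  have "(bb*r - t)^2/(2*bb*t) \<ge> 0" using assms by simp
  thus ?thesis using eq by linarith
qed

lemma tri_path:
  fixes \<sigma> :: "'x \<Rightarrow> 'x \<Rightarrow> real"
  assumes "is_metric \<sigma>" "j < length xs"
  shows "\<sigma> (xs!0) (xs!j) \<le> (\<Sum>i<j. \<sigma> (xs!i) (xs!Suc i))"
  using assms(2)
proof (induction j)
  case 0
  have "\<sigma> (xs!0) (xs!0) = 0" using assms(1) unfolding is_metric_def by blast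
  then show ?case by simp
next
  case (Suc j)
  have IH: "\<sigma> (xs!0) (xs!j) \<le> (\<Sum>i<j. \<sigma> (xs!i) (xs!Suc i))"
    using Suc.IH Suc.prems by simp
  have "\<sigma> (xs!0) (xs!Suc j) \<le> \<sigma> (xs!0) (xs!j) + \<sigma> (xs!j) (xs!Suc j)"
    using assms(1) unfolding is_metric_def by blast
  then show ?case using IH by (simp only: sum.lessThan_Suc)
qed

theorem mainTheorem6:
  fixes b :: "'x \<Rightarrow> 'x \<Rightarrow> real" and c :: "'x \<Rightarrow> real"
  assumes "countable (UNIV :: 'x set)" and "infinite (UNIV :: 'x set)"
    and "weighted_graph b c" and "locally_finite_graph b" and "connected_graph b"
    and "\<exists>C. \<forall>x y. graph_dist b x y \<le> C"
  shows "\<forall>\<sigma> m. is_metric \<sigma> \<and> is_measure_on m \<and> finite_total_mass m \<and> intrinsic b m \<sigma>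
           \<longrightarrow> totally_bounded_wrt \<sigma>"
proof (intro allI impI)
  fix \<sigma> m :: "'x \<Rightarrow> _"
  assume A: "is_metric \<sigma> \<and> is_measure_on m \<and> finite_total_mass m \<and> intrinsic b m \<sigma>"
  have met: "is_metric \<sigma>" and mnn: "\<And>x. 0 \<le> m x" and msum: "m summable_on UNIV"
    and intr: "intrinsic b m \<sigma>"
    using A by (auto simp: is_measure_on_def finite_total_mass_def)
  have bnn: "\<And>x y. 0 \<le> b x y" using assms(3) by (simp add: weighted_graph_def)
  have snn: "\<And>x y. 0 \<le> \<sigma> x y"
  proof -
    fix x y
    have "\<sigma> x x \<le> \<sigma> x y + \<sigma> y x" "\<sigma> x x = 0" "\<sigma> y x = \<sigma> x y"
      using met unfolding is_metric_def by blast+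
    thus "0 \<le> \<sigma> x y" by linarith
  qed
  have edge: "b x y * (\<sigma> x y)^2 \<le> 2 * m x" for x y
  proof -
    have s: "(\<lambda>y. b x y * (\<sigma> x y)^2) summable_on UNIV"
      and le: "(1/2) * (\<Sum>\<^sub>\<infinity>y. b x y * (\<sigma> x y)^2) \<le> m x"
      using intr unfolding intrinsic_def by blast+
    have "sum (\<lambda>y. b x y * (\<sigma> x y)^2) {y} \<le> (\<Sum>\<^sub>\<infinity>y. b x y * (\<sigma> x y)^2)"
      by (rule fin_le_infsum[OF s]) (use bnn in auto)
    thus ?thesis using le by simp
  qed
  obtain C where C: "\<And>x y. graph_dist b x y \<le> C" using assms(6) by blast
  define C0 where "C0 = \<bar>C\<bar> + 1"
  have C0: "C0 > 0" "C < C0" unfolding C0_def by auto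
  show "totally_bounded_wrt \<sigma>"
    unfolding totally_bounded_wrt_def
  proof (intro allI impI)
    fix e :: real assume e: "e > 0"
    define t where "t = e / C0"
    define \<delta> where "\<delta> = t * e / 4"
    have t: "t > 0" using e C0 by (simp add: t_def)
    have dpos: "\<delta> > 0" using t e by (simp add: \<delta>_def)
    obtain K where K: "finite K" "\<And>F. finite F \<Longrightarrow> F \<inter> K = {} \<Longrightarrow> sum m F < \<delta>"
      using tail_small[OF msum mnn dpos] by blast
    define ov where "ov = (undefined :: 'x)"
    define F where "F = insert ov K"
    have "\<forall>x. \<exists>y\<in>F. \<sigma> x y < e"
    proof
      fix x
      show "\<exists>y\<in>F. \<sigma> x y < e"
      proof (cases "x \<in> F")
        case True
        have "\<sigma> x x = 0" using met unfolding is_metric_def by blast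
        then show ?thesis using True e by (intro bexI[of _ x]) auto
      next
        case False
        hence xo: "x \<noteq> ov" by (auto simp: F_def)
        define P where "P = {path_length b xs | xs. path_from_to b x ov xs}"
        have Pne: "P \<noteq> {}" using assms(5) xo unfolding connected_graph_def P_def by blast
        have Pbdd: "bdd_below P"
        proof (rule bdd_belowI[of _ 0])
          fix p assume "p \<in> P"
          then obtain xs where "p = path_length b xs" unfolding P_def by blast
          thus "0 \<le> p" unfolding path_length_def by (auto intro!: sum_nonneg simp: bnn)
        qed
        have "Inf P < C0" using C[of x ov] xo C0 unfolding graph_dist_def P_def by simp
        then obtain p where "p \<in> P" "p < C0" using cInf_lessD[OF Pne] by blast
        then obtain xs where xs: "path_from_to b x ov xs" and PL: "path_length b xs < C0"
          unfolding P_def by blast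
        have ne: "xs \<noteq> []" and dist: "distinct xs"
          and adj: "\<And>i. Suc i < length xs \<Longrightarrow> b (xs ! i) (xs ! Suc i) > 0"
          and hd: "hd xs = x" and lst: "last xs = ov"
          using xs unfolding path_from_to_def is_path_def by auto
        define n where "n = length xs"
        have n: "n > 0" using ne by (simp add: n_def)
        have x0: "xs ! 0 = x" using hd ne by (simp add: hd_conv_nth)
        have on: "xs ! (n - 1) \<in> F" using lst ne by (simp add: last_conv_nth n_def F_def)
        define j where "j = (LEAST j. xs ! j \<in> F)"
        have jF: "xs ! j \<in> F" unfolding j_def using on by (rule LeastI)
        have jle: "j \<le> n - 1" unfolding j_def using on by (rule Least_le)
        have jlt: "j < n" using jle n by linarith
        have notF: "\<And>i. i < j \<Longrightarrow> xs ! i \<notin> F" unfolding j_def by (rule not_less_Least)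
        have bpos: "\<And>i. i < j \<Longrightarrow> b (xs ! i) (xs ! Suc i) > 0"
          using adj jlt by (simp add: n_def)
        have "\<sigma> (xs!0) (xs!j) \<le> (\<Sum>i<j. \<sigma> (xs!i) (xs!Suc i))"
          using tri_path[OF met] jlt by (simp add: n_def)
        also have "\<dots> \<le> (\<Sum>i<j. t / (2 * b (xs!i) (xs!Suc i)) +
                 b (xs!i) (xs!Suc i) * (\<sigma> (xs!i) (xs!Suc i))^2 / (2*t))"
          by (rule sum_mono, rule amgm) (use bpos t snn in auto)
        also have "\<dots> = t/2 * (\<Sum>i<j. 1 / b (xs!i) (xs!Suc i)) +
                 (1/(2*t)) * (\<Sum>i<j. b (xs!i) (xs!Suc i) * (\<sigma> (xs!i) (xs!Suc i))^2)"
        proof -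
          have "\<And>i. t / (2 * b (xs!i) (xs!Suc i)) = t/2 * (1 / b (xs!i) (xs!Suc i))" by simp
          moreover have "\<And>i. b (xs!i) (xs!Suc i) * (\<sigma> (xs!i) (xs!Suc i))^2 / (2*t)
             = (1/(2*t)) * (b (xs!i) (xs!Suc i) * (\<sigma> (xs!i) (xs!Suc i))^2)" by simp
          ultimately show ?thesis by (simp only: sum.distrib sum_distrib_left)
        qed
        also have "\<dots> \<le> t/2 * C0 + (1/(2*t)) * (2 * \<delta>)"
        proof (rule add_mono)
          have "(\<Sum>i<j. 1 / b (xs!i) (xs!Suc i)) \<le> path_length b xs"
            unfolding path_length_def
            by (rule sum_mono2) (use jle bnn in \<open>auto simp: n_def\<close>)
          thus "t/2 * (\<Sum>i<j. 1 / b (xs!i) (xs!Suc i)) \<le> t/2 * C0"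
            using PL t by simp
        next
          have "(\<Sum>i<j. b (xs!i) (xs!Suc i) * (\<sigma> (xs!i) (xs!Suc i))^2) \<le> (\<Sum>i<j. 2 * m (xs!i))"
            by (rule sum_mono) (rule edge)
          also have "\<dots> = 2 * sum m ((!) xs ` {..<j})"
          proof -
            have "inj_on ((!) xs) {..<j}"
              using dist jlt by (auto simp: inj_on_def nth_eq_iff_index_eq n_def)
            thus ?thesis by (simp add: sum.reindex sum_distrib_left)
          qed
          also have "\<dots> \<le> 2 * \<delta>"
          proof -
            have "(!) xs ` {..<j} \<inter> K = {}" using notF by (auto simp: F_def)
            thus ?thesis using K(2)[of "(!) xs ` {..<j}"] by simp
          qed
          finally show "(1/(2*t)) * (\<Sum>i<j. b (xs!i) (xs!Suc i) * (\<sigma> (xs!i) (xs!Suc i))^2)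
                 \<le> (1/(2*t)) * (2 * \<delta>)"
            by (rule mult_left_mono) (use t in auto)
        qed
        also have "\<dots> = e/2 + e/4" using t C0 e by (simp add: t_def \<delta>_def field_simps)
        also have "\<dots> < e" using e by simp
        finally show ?thesis using jF x0 by blast
      qed
    qed
    thus "\<exists>F. finite F \<and> (\<forall>x. \<exists>y\<in>F. \<sigma> x y < e)" using K(1) F_def by blast
  qed
qed

end
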